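(* Let $\theta>1$, $r\in(\theta^{-1},\theta^{-1/2}]$, $\rho\in(0,1]$, and $s=\frac1\rho\big(\frac{\ln\theta}{\ln(r\theta)}-2\big)$. Then \[ \max_{z\in[\frac1r,\ \frac1r+\rho(\theta-\frac1r)]}\frac{\Phi^\rho_r(z)^{s+1}}{z^{s}}\ \le\ r\theta. \]
   Context: Let $\varphi_r(z)=\frac{r\theta-1}{1-r}+\frac{1-r^2\theta}{1-r}\cdot\frac{z}{r\theta}$ (the line through $(r\theta,r\theta)$ and $(\theta,1/r)$). For $\rho\in(0,1]$ define $\Phi^\rho_r:[1,\theta]\to[1,\theta]$ by \[ \Phi^\rho_r(y)=\begin{cases} r\theta & y\in[1,r\theta)\\ \varphi_r(y) & y\in[r\theta,\tfrac1r)\\ \varphi_r(\tfrac1r)+\big(\tfrac1r-\varphi_r(\tfrac1r)\big)\dfrac{y-\tfrac1r}{\rho(\theta-\tfrac1r)} & y\in[\tfrac1r,\tfrac1r+\rho(\theta-\tfrac1r))\\ \tfrac1r & y\in[\tfrac1r+\rho(\theta-\tfrac1r),\theta].\end{cases} \] *)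

theory Defs
  imports Complex_Main
begin

text \<open>The line through (r*theta, r*theta) and (theta, 1/r).\<close>
definition varphi :: "real \<Rightarrow> real \<Rightarrow> real \<Rightarrow> real" where
  "varphi \<theta> r z = (r*\<theta> - 1)/(1 - r) + (1 - r^2*\<theta>)/(1 - r) * (z / (r*\<theta>))"

text \<open>The map Phi^rho_r on [1, theta] (values outside [1,theta] are irrelevant).\<close>
definition Phi :: "real \<Rightarrow> real \<Rightarrow> real \<Rightarrow> real \<Rightarrow> real" where
  "Phi \<theta> \<rho> r y =
     (if y < r*\<theta> then r*\<theta>
      else if y < 1/r then varphi \<theta> r y
      else if y < 1/r + \<rho>*(\<theta> - 1/r) then
        varphi \<theta> r (1/r) + (1/r - varphi \<theta> r (1/r)) * ((y - 1/r) / (\<rho>*(\<theta> - 1/r)))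
      else 1/r)"

end

theory Submission imports Defs "HOL-Analysis.Analysis" begin

lemma tangent_powr:
  fixes m x y :: real
  assumes "m \<ge> 1" "x > 0" "y > 0"
  shows "m * x powr (m-1) * (y - x) \<le> y powr m - x powr m"
proof -
  have "(\<lambda>u. m * u powr (m-1)) x * (y - x) \<le> (\<lambda>u. u powr m) y - (\<lambda>u. u powr m) x"
  proof (rule f''_imp_f'[where C="{0<..}" and f'' = "\<lambda>u. m * ((m-1) * u powr (m-1-1))"])
    show "convex {0::real<..}" by simp
    show "\<And>u. u \<in> {0<..} \<Longrightarrow> DERIV (\<lambda>u. u powr m) u :> m * u powr (m-1)"
      by (auto intro!: derivative_eq_intros)
    show "\<And>u. u \<in> {0<..} \<Longrightarrow> DERIV (\<lambda>u. m * u powr (m-1)) u :> m * ((m-1) * u powr (m-1-1))"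
      by (auto intro!: derivative_eq_intros)
    show "\<And>u. u \<in> {0<..} \<Longrightarrow> 0 \<le> m * ((m-1) * u powr (m-1-1))"
      using assms by auto
  qed (use assms in auto)
  then show ?thesis by simp
qed

lemma keyK:
  fixes q m :: real
  assumes q: "q > 1" and m: "m \<ge> 1"
  shows "(q powr m - 1)^2 \<le> (q - 1) * (q powr (m*m) - 1)"
proof -
  define D where "D = (\<lambda>t. (q - 1) * (q powr (t*t) - 1) - (q powr t - 1)^2)"
  have "D 1 \<le> D m"
  proof (rule DERIV_nonneg_imp_nondecreasing[OF m])
    fix t assume t: "1 \<le> t" "t \<le> m"
    have dv: "DERIV D t :> (q - 1) * (q powr (t*t) * ln q * (2*t)) - 2 * (q powr t - 1) * (q powr t * ln q)"
      unfolding D_def using q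
      by (auto intro!: derivative_eq_intros simp: algebra_simps)
    have b1: "q powr t - 1 \<le> t * q powr (t-1) * (q - 1)"
      using tangent_powr[of t q 1] q t by (simp add: algebra_simps)
    have b2: "q powr (2*t-1) \<le> q powr (t*t)"
    proof (rule powr_mono)
      have "0 \<le> (t-1)^2" by simp
      then show "2*t-1 \<le> t*t" by (simp add: power2_eq_square algebra_simps)
    qed (use q in auto)
    have e: "q powr (2*t-1) = q powr t * q powr (t-1)"
      by (simp add: powr_add[symmetric])
    have "(q powr t - 1) * q powr t \<le> t * q powr (t-1) * (q - 1) * q powr t"
      using b1 q by (intro mult_right_mono) auto
    also have "\<dots> = (q-1) * t * q powr (2*t-1)" unfolding e by (simp add: algebra_simps)
    also have "\<dots> \<le> (q-1) * t * q powr (t*t)"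
      using b2 q t by (intro mult_left_mono) auto
    finally have "0 \<le> ln q * (2 * ((q-1) * t * q powr (t*t) - (q powr t - 1) * q powr t))"
      using q by (intro mult_nonneg_nonneg) auto
    then show "\<exists>y. DERIV D t :> y \<and> y \<ge> 0"
      using dv by (intro exI[of _ _]) (auto simp: algebra_simps)
  qed
  then show ?thesis unfolding D_def using q by (simp add: power2_eq_square)
qed
theorem corollary4:
  fixes \<theta> r \<rho> s :: real
  assumes "\<theta> > 1"
    and "1/\<theta> < r" and "r \<le> \<theta> powr (-1/2)"
    and "0 < \<rho>" and "\<rho> \<le> 1"
    and "s = (1/\<rho>) * (ln \<theta> / ln (r*\<theta>) - 2)"
  shows "\<forall>z \<in> {1/r .. 1/r + \<rho>*(\<theta> - 1/r)}.
           Phi \<theta> \<rho> r z powr (s+1) / z powr s \<le> r*\<theta>"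
proof
  fix z assume zI: "z \<in> {1/r .. 1/r + \<rho>*(\<theta> - 1/r)}"
  note th = assms(1) and rho = assms(4,5)
  have r0: "r > 0" using assms(2) th by (smt (verit) divide_pos_pos)
  define x where "x = r*\<theta>"
  have x1: "x > 1" using assms(2) th r0 unfolding x_def by (simp add: field_simps)
  have "(\<theta> powr (-1/2))^2 = \<theta> powr (-1)"
    using th by (simp add: power2_eq_square powr_add[symmetric])
  also have "\<dots> = 1/\<theta>" using th by (simp add: powr_minus divide_inverse)
  finally have "r^2 \<le> 1/\<theta>"
    using assms(3) r0 by (metis less_le power_mono)
  then have r2: "r^2 * \<theta> \<le> 1" using th by (simp add: field_simps)
  have xx: "x^2 \<le> \<theta>" using r2 th unfolding x_def
    by (simp add: power2_eq_square field_simps)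
  have r1: "r < 1"
  proof -
    have "r * r < r * r * \<theta>" using th r0 by simp
    then have "r*r < 1" using r2 by (simp add: power2_eq_square)
    then show ?thesis using r0 by (smt (verit) mult_le_cancel_left1)
  qed
  have xr: "x \<le> 1/r" using r2 r0 unfolding x_def by (simp add: field_simps power2_eq_square)
  define a where "a = ln x"
  define L where "L = ln \<theta>"
  have a0: "a > 0" using x1 unfolding a_def by simp
  have "ln (x^2) \<le> ln \<theta>" using xx x1 th by (subst ln_le_cancel_iff) auto
  then have "2*a \<le> L" unfolding a_def L_def using x1 by (simp add: ln_realpow)
  define m where "m = (L - a)/a"
  have m1: "m \<ge> 1" unfolding m_def using a0 \<open>2*a \<le> L\<close> by (simp add: field_simps)
  have xm: "x powr m = \<theta>/x"
  proof -
    have "x powr m = exp (m * a)" using x1 unfolding a_def by (simp add: powr_def)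
    also have "m * a = L - a" unfolding m_def using a0 by simp
    also have "exp (L - a) = \<theta>/x" unfolding L_def a_def using th x1 by (simp add: exp_diff)
    finally show ?thesis .
  qed
  have sm: "s = (m-1)/\<rho>" unfolding assms(6) m_def using a0
    by (simp add: a_def L_def x_def field_simps)
  have s0: "s \<ge> 0" using sm m1 rho by simp
  have sm1: "s + 1 \<ge> m"
  proof -
    have "(m-1) * \<rho> \<le> (m-1)" using m1 rho by (simp add: mult_left_le)
    then have "m - 1 \<le> s" unfolding sm using rho by (simp add: field_simps)
    then show ?thesis by simp
  qed
  define u0 where "u0 = varphi \<theta> r (1/r)"
  define w where "w = r * u0"
  have wx: "w * x = 1 + (x-1)^2/(x powr m - 1)"
  proof -
    have e1: "x powr m = 1/r" using xm th unfolding x_def by simp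
    have nz: "1 - r \<noteq> 0" "r \<noteq> 0" "\<theta> \<noteq> 0" using r0 r1 th by auto
    have x0: "x \<noteq> 0" using x1 by simp
    have rt: "r^2 * \<theta> = r * x" "(1/r)/(r*\<theta>) = 1/(r*x)" unfolding x_def by (simp_all add: power2_eq_square)
    have A: "u0 = ((x-1) + (1 - r*x)/(r*x))/(1-r)"
    proof -
      have A0: "u0 = (x-1)/(1-r) + (1-r*x)/(1-r)*(1/(r*x))"
        unfolding u0_def varphi_def rt by (simp add: x_def)
      show ?thesis unfolding A0 by (simp add: add_divide_distrib)
    qed
    have B: "w*x = (r*x*(x-1) + (1 - r*x))/(1-r)"
      unfolding w_def A using nz x0 by (simp add: field_simps)
    have C: "1 + (x-1)^2/(1/r-1) = ((1-r) + r*(x-1)^2)/(1-r)" using nz by (simp add: field_simps)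
    have D: "r*x*(x-1) + (1-r*x) = (1-r) + r*(x-1)^2" by (simp add: power2_eq_square algebra_simps)
    have "w * x = 1 + (x-1)^2/(1/r - 1)" using B C D by simp
    then show ?thesis using e1 by simp
  qed
  have xm1: "x powr m > 1" using x1 m1 by simp
  define q where "q = x powr (1/m)"
  have q1: "q > 1" unfolding q_def using x1 m1 by (smt (verit) divide_pos_pos powr_less_mono powr_zero_eq_one)
  have qm: "q powr m = x" unfolding q_def using x1 m1 by (simp add: powr_powr)
  have qmm: "q powr (m*m) = x powr m" unfolding q_def using x1 m1 by (simp add: powr_powr)
  have "(x - 1)^2 \<le> (q - 1) * (x powr m - 1)" using keyK[OF q1 m1] qm qmm by simp
  then have "(x-1)^2/(x powr m - 1) \<le> q - 1" using xm1 by (simp add: divide_le_eq)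
  then have wxq: "w * x \<le> q" using wx by simp
  have wx1: "w * x \<ge> 1" using wx xm1 by simp
  have w0: "w > 0" using wx1 x1 by (smt (verit) zero_less_mult_iff)
  have w1: "w \<le> 1"
  proof -
    have "(x-1)^2 \<le> (x-1)*(x powr m - 1)"
      unfolding power2_eq_square using x1 xm xx
      by (intro mult_left_mono) (auto simp: field_simps power2_eq_square)
    then have "(x-1)^2/(x powr m - 1) \<le> x - 1" using xm1 by (simp add: divide_le_eq)
    then have "w * x \<le> x" using wx by simp
    then show ?thesis using x1 by simp
  qed
  have "(w*x) powr m \<le> q powr m" using wxq wx1 m1 by (intro powr_mono2) auto
  then have "w powr m * x powr m \<le> x" using qm w0 x1 by (simp add: powr_mult)
  then have wm: "w powr m \<le> x / x powr m" using xm1 x1 by (simp add: le_divide_eq)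
  have "w powr (s+1) \<le> w powr m" using sm1 w0 w1 by (intro powr_mono') auto
  then have "w powr (s+1) \<le> x / x powr m" using wm by simp
  moreover have "x powr m = 1/r" using xm th unfolding x_def by simp
  ultimately have "w powr (s+1) \<le> r * x" using r0 by (simp add: mult.commute)
  then have "(1/r) * w powr (s+1) \<le> (1/r) * (r * x)" using r0 by (intro mult_left_mono) auto
  then have E1: "(1/r) * w powr (s+1) \<le> x" using r0 by simp
  define zR where "zR = 1/r + \<rho>*(\<theta> - 1/r)"
  define Y where "Y = r * zR"
  have Yeq: "Y = 1 + \<rho>*(x-1)" unfolding Y_def zR_def x_def using r0 by (simp add: field_simps)
  have Y1: "Y \<ge> 1" using Yeq rho x1 by simp
  have "(1/\<rho>) * (x powr \<rho>) powr (1/\<rho> - 1) * (1 - x powr \<rho>) \<le> 1 powr (1/\<rho>) - (x powr \<rho>) powr (1/\<rho>)"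
    using rho x1 by (intro tangent_powr) auto
  then have "(1/\<rho>) * (x powr \<rho>) powr (1/\<rho> - 1) * (1 - x powr \<rho>) \<le> 1 - x"
    using rho x1 by (simp add: powr_powr)
  have xrho: "x powr \<rho> \<le> Y"
  proof -
    have "(1/\<rho>) * 1 powr (1/\<rho> - 1) * (x powr \<rho> - 1) \<le> (x powr \<rho>) powr (1/\<rho>) - 1 powr (1/\<rho>)"
      using rho x1 by (intro tangent_powr) auto
    then have "(x powr \<rho> - 1)/\<rho> \<le> x - 1" using rho x1 by (simp add: powr_powr)
    then show ?thesis using Yeq rho by (simp add: field_simps)
  qed
  have "(x powr \<rho>) powr s \<le> Y powr s" using xrho s0 x1 by (intro powr_mono2) auto
  then have Ys: "x powr (m - 1) \<le> Y powr s" using sm rho x1 by (simp add: powr_powr)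
  have "x powr (m-1) = x powr m / x" using x1 by (simp add: powr_diff)
  then have Ys': "\<theta> / x / x \<le> Y powr s" using Ys xm by simp
  have E2: "zR * (1/Y) powr (s+1) \<le> x"
  proof -
    have "zR * (1/Y) powr (s+1) = (1/r) / Y powr s"
      using Y1 r0 unfolding Y_def by (simp add: powr_divide powr_add field_simps)
    also have "\<dots> \<le> (1/r) / (\<theta>/x/x)"
      using Ys' r0 th x1 Y1 by (intro divide_left_mono) auto
    also have "\<dots> = x" unfolding x_def using r0 th by (simp add: field_simps)
    finally show ?thesis .
  qed
  have d0: "\<rho>*(\<theta> - 1/r) > 0" using rho assms(2) r0 th by (simp add: field_simps)
  define t where "t = (z - 1/r)/(\<rho>*(\<theta> - 1/r))"
  have t0: "t \<ge> 0" and t1: "t \<le> 1" using zI d0 unfolding t_def by (auto simp: field_simps)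
  define P where "P = (1-t)*u0 + t*(1/r)"
  have PhiP: "Phi \<theta> \<rho> r z = P"
  proof (cases "z < zR")
    case True
    have c1: "\<not> z < r*\<theta>" "\<not> z < 1/r" "z < 1/r + \<rho>*(\<theta> - 1/r)"
      using True zI xr unfolding x_def zR_def by auto
    have "Phi \<theta> \<rho> r z = u0 + (1/r - u0) * t"
      unfolding Phi_def u0_def[symmetric] t_def[symmetric] using c1 by simp
    then show ?thesis unfolding P_def by (simp add: algebra_simps)
  next
    case False
    then have "z = zR" using zI unfolding zR_def by auto
    then have "t = 1" unfolding t_def zR_def using d0 by auto
    then show ?thesis using False zI xr unfolding Phi_def P_def zR_def x_def by auto
  qed
  have u0pos: "u0 > 0" using w0 r0 unfolding w_def by (simp add: zero_less_mult_iff)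
  have P0: "P > 0"
  proof (cases "t = 1")
    case False
    then have "(1-t)*u0 > 0" using t1 u0pos by simp
    moreover have "t*(1/r) \<ge> 0" using t0 r0 by simp
    ultimately show ?thesis unfolding P_def by linarith
  qed (use r0 in \<open>simp add: P_def\<close>)
  have z0: "z > 0" using zI r0 by (smt (verit) atLeastAtMost_iff divide_pos_pos)
  have zeq: "z = (1-t)*(1/r) + t*zR"
  proof -
    have "t * (\<rho>*(\<theta> - 1/r)) = z - 1/r" unfolding t_def using d0 by auto
    then show ?thesis unfolding zR_def by (simp add: algebra_simps diff_divide_distrib)
  qed
  define lam where "lam = t*zR/z"
  have zRpos: "zR > 0" using Y1 r0 unfolding Y_def by (smt (verit) zero_less_mult_iff)
  have lam0: "lam \<ge> 0" unfolding lam_def using t0 zRpos z0 by simp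
  have lam1: "lam \<le> 1" unfolding lam_def using zeq t1 r0 z0 by (simp add: divide_le_eq)
  have l1: "1 - lam = (1-t)*(1/r)/z" unfolding lam_def using z0 zeq by (simp add: field_simps)
  have l2: "lam*(1/Y) = t/(r*z)" unfolding lam_def Y_def using zRpos r0 z0 by (simp add: field_simps)
  have Pz: "P/z = (1-lam)*w + lam*(1/Y)"
    unfolding l1 l2 P_def w_def using r0 z0 by (simp add: field_simps)
  have conv: "convex_on {0<..} (\<lambda>u::real. u powr (s+1))" using s0 by (intro powr_convex) simp
  have "(P/z) powr (s+1) \<le> (1-lam) * w powr (s+1) + lam * (1/Y) powr (s+1)"
    using convex_onD[OF conv, of lam w "1/Y"] lam0 lam1 w0 Y1 Pz by simp
  then have "z * (P/z) powr (s+1) \<le> z * ((1-lam) * w powr (s+1) + lam * (1/Y) powr (s+1))"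
    using z0 by (intro mult_left_mono) auto
  also have "\<dots> = (1-t) * ((1/r) * w powr (s+1)) + t * (zR * (1/Y) powr (s+1))"
  proof -
    have zl1: "z*(1-lam) = (1-t)*(1/r)" using l1 z0 by simp
    have zl2: "z*lam = t*zR" unfolding lam_def using z0 by simp
    have "z * ((1-lam) * w powr (s+1) + lam * (1/Y) powr (s+1))
        = (z*(1-lam)) * w powr (s+1) + (z*lam) * (1/Y) powr (s+1)" by (simp add: algebra_simps)
    then show ?thesis unfolding zl1 zl2 by simp
  qed
  also have "\<dots> \<le> (1-t) * x + t * x"
    using E1 E2 t0 t1 by (intro add_mono mult_left_mono) auto
  also have "\<dots> = r*\<theta>" unfolding x_def by (simp add: algebra_simps)
  finally have fin: "z * (P/z) powr (s+1) \<le> r*\<theta>" .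
  have "z * (P/z) powr (s+1) = P powr (s+1) / z powr s"
    using z0 P0 by (simp add: powr_divide powr_add field_simps)
  then show "Phi \<theta> \<rho> r z powr (s+1) / z powr s \<le> r*\<theta>" using fin PhiP by simp
qed

end
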